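(* Let $H:\mathbb{R}^n\to\mathbb{R}$ be $\mu_H$-strongly convex with $\mu_H>0$, let $f^i_{j_i}:\mathbb{R}^n\to\mathbb{R}$ ($i\in[S]$, $j_i\in[I_i]$) be convex, and let $X\subset\mathbb{R}^n$ be nonempty, compact and convex. Let $m:=\sum_{i=1}^S I_i$, $F:=\sum_{i=1}^S\sum_{j_i=1}^{I_i} f^i_{j_i}$, and let $x^*_H$ be the unique solution of the bilevel problem: minimize $H(x)$ subject to $x\in\operatorname{argmin}_{y\in X}F(y)$. Let $\epsilon\in(0,0.5)$, and define $\gamma_k=\frac{\gamma_1}{k^a}$ and $\lambda_k=\frac{\lambda_1}{k^b}$ for $k\ge1$, where $\gamma_1,\lambda_1>0$ with $\gamma_1\lambda_1\mu_H\le 2m$, $a=0.5+0.5\epsilon$ and $b=0.5-\epsilon$. Let $\{x_k\}_{k=1}^\infty$ be a sequence generated by FISM (described in the context) with these stepsizes, and set $\hat x_K:=\frac{\sum_{k=1}^K\gamma_kx_k}{\sum_{k=1}^K\gamma_k}$. Then for $K\ge1$, $$F(\hat x_K)-F(x^*_H)\le\mathcal{O}\Big(\frac{1}{K^{0.5-\epsilon}}\Big).$$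
   Context: Notation: $[s]:=\{1,\dots,s\}$; $P_X$ is the Euclidean metric projection onto $X$; $\partial$ denotes the convex subdifferential; $\mathcal{O}(\cdot)$ hides a constant independent of $K$. FISM (Federated Incremental Subgradient Method): given a starting point $x_1\in\mathbb{R}^n$ and positive stepsizes $\{\gamma_k\},\{\lambda_k\}$, for $k=1,2,\dots$: pick $\mathcal{H}_k\in\partial H(x_k)$; for every client $i\in[S]$ set $x^i_{k,1}=x_k$ and for $j_i=1,\dots,I_i$ pick $g^i_{k,j_i}\in\partial f^i_{j_i}(x^i_{k,j_i})$ and set $x^i_{k,j_i+1}=P_X\big[x^i_{k,j_i}-\gamma_k g^i_{k,j_i}-\frac{\gamma_k\lambda_k}{m}\mathcal{H}_k\big]$; then set $x^i_k=x^i_{k,I_i+1}$ and $x_{k+1}=\frac1S\sum_{i=1}^S x^i_k$. *)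

theory Defs
  imports "HOL-Analysis.Analysis"
begin

definition subdiff :: "('a::real_inner \<Rightarrow> real) \<Rightarrow> 'a \<Rightarrow> 'a set" where
  "subdiff f x = {g. \<forall>y. f x + inner g (y - x) \<le> f y}"

definition strongly_convex :: "real \<Rightarrow> ('a::real_normed_vector \<Rightarrow> real) \<Rightarrow> bool" where
  "strongly_convex mu f \<longleftrightarrow> (\<forall>x y t. 0 \<le> t \<and> t \<le> 1 \<longrightarrow>
     f (t *\<^sub>R x + (1 - t) *\<^sub>R y) \<le> t * f x + (1 - t) * f y - mu / 2 * t * (1 - t) * (norm (x - y))\<^sup>2)"

abbreviation proj :: "'a::euclidean_space set \<Rightarrow> 'a \<Rightarrow> 'a" where
  "proj X v \<equiv> closest_point X v"

definition bilevel_solution :: "('a \<Rightarrow> real) \<Rightarrow> ('a \<Rightarrow> real) \<Rightarrow> 'a set \<Rightarrow> 'a \<Rightarrow> bool" where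
  "bilevel_solution H F X x \<longleftrightarrow>
     x \<in> X \<and> (\<forall>y\<in>X. F x \<le> F y) \<and>
     (\<forall>z\<in>X. (\<forall>y\<in>X. F z \<le> F y) \<longrightarrow> H x \<le> H z)"

text \<open>FISM iteration. Clients i in {1..S}, client i holds f i j for j in {1..I i};
  z k i j is the inner iterate x^i_{k,j}, g k i j the chosen subgradient, hH k the chosen
  subgradient of H at x k.\<close>
definition FISM ::
  "nat \<Rightarrow> (nat \<Rightarrow> nat) \<Rightarrow> (nat \<Rightarrow> nat \<Rightarrow> 'a::euclidean_space \<Rightarrow> real) \<Rightarrow> ('a \<Rightarrow> real) \<Rightarrow> 'a set
   \<Rightarrow> (nat \<Rightarrow> real) \<Rightarrow> (nat \<Rightarrow> real) \<Rightarrow> (nat \<Rightarrow> 'a) \<Rightarrow> bool" where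
  "FISM S I f H X gam lam x \<longleftrightarrow>
    (\<exists>hH z g. \<forall>k\<ge>1.
        hH k \<in> subdiff H (x k) \<and>
        (\<forall>i\<in>{1..S}.
           z k i 1 = x k \<and>
           (\<forall>j\<in>{1..I i}.
              g k i j \<in> subdiff (f i j) (z k i j) \<and>
              z k i (j + 1) = proj X (z k i j - gam k *\<^sub>R g k i j
                 - (gam k * lam k / real (\<Sum>i'\<in>{1..S}. I i')) *\<^sub>R hH k))) \<and>
        x (k + 1) = (1 / real S) *\<^sub>R (\<Sum>i\<in>{1..S}. z k i (I i + 1)))"

end

theory Submission
  imports Defs "HOL-Analysis.Analysis"
begin

lemma bounded_on_compact:
  fixes f :: "'a::euclidean_space \<Rightarrow> real"
  assumes "continuous_on UNIV f" "compact A"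
  shows "\<exists>M\<ge>0. \<forall>w\<in>A. \<bar>f w\<bar> \<le> M"
proof -
  have "compact (f ` A)"
    using compact_continuous_image[OF continuous_on_subset[OF assms(1)] assms(2)] by simp
  then obtain M where "\<forall>v\<in>f ` A. norm v \<le> M" using compact_imp_bounded bounded_iff by metis
  then show ?thesis by (intro exI[of _ "max M 0"]) auto
qed

lemma compact_ball_bound:
  fixes X :: "'a::euclidean_space set"
  assumes "compact X"
  shows "\<exists>R\<ge>0. \<forall>x\<in>X. norm x \<le> R"
proof -
  obtain R where "\<forall>x\<in>X. norm x \<le> R" using compact_imp_bounded[OF assms] bounded_iff by metis
  then show ?thesis by (intro exI[of _ "max R 0"]) auto
qed

lemma subgrad_bound:
  fixes f :: "'a::euclidean_space \<Rightarrow> real"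
  assumes "convex_on UNIV f" "compact X"
  shows "\<exists>G\<ge>0. \<forall>z\<in>X. \<forall>g\<in>subdiff f z. norm g \<le> G"
proof -
  obtain R where R: "R \<ge> 0" "\<forall>x\<in>X. norm x \<le> R" using compact_ball_bound[OF assms(2)] by blast
  have cont: "continuous_on UNIV f" by (rule convex_on_continuous[OF open_UNIV assms(1)])
  obtain M where M: "M \<ge> 0" "\<forall>w\<in>cball 0 (R+1). \<bar>f w\<bar> \<le> M"
    using bounded_on_compact[OF cont compact_cball] by blast
  show ?thesis
  proof (intro exI[of _ "2*M"] conjI ballI)
    show "0 \<le> 2*M" using M by simp
    fix z g assume z: "z \<in> X" and g: "g \<in> subdiff f z"
    show "norm g \<le> 2*M"
    proof (cases "g = 0")
      case True then show ?thesis using M by simp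
    next
      case False
      define w where "w = z + (1/norm g) *\<^sub>R g"
      have "norm w \<le> norm z + norm ((1/norm g) *\<^sub>R g)" unfolding w_def by (rule norm_triangle_ineq)
      also have "\<dots> = norm z + 1" using False by simp
      finally have wb: "norm w \<le> R + 1" using R z by force
      have z1: "norm z \<le> R + 1" using R z by force
      have "f z + inner g (w - z) \<le> f w" using g unfolding subdiff_def by blast
      moreover have "inner g (w - z) = norm g"
        using False by (simp add: w_def power2_norm_eq_inner[symmetric] power2_eq_square)
      ultimately have "norm g \<le> f w - f z" by simp
      also have "\<dots> \<le> 2*M" using M wb z1 by (smt (verit) mem_cball_0)
      finally show ?thesis .
    qed
  qed
qed

lemma lipschitz_bound:
  fixes f :: "'a::euclidean_space \<Rightarrow> real"
  assumes "convex_on UNIV f" "compact X"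
  shows "\<exists>L\<ge>0. \<forall>u\<in>X. \<forall>v\<in>X. f u - f v \<le> L * norm (u - v)"
proof -
  obtain R where R: "R \<ge> 0" "\<forall>x\<in>X. norm x \<le> R" using compact_ball_bound[OF assms(2)] by blast
  have cont: "continuous_on UNIV f" by (rule convex_on_continuous[OF open_UNIV assms(1)])
  obtain M where M: "M \<ge> 0" "\<forall>w\<in>cball 0 (R+1). \<bar>f w\<bar> \<le> M"
    using bounded_on_compact[OF cont compact_cball] by blast
  show ?thesis
  proof (intro exI[of _ "2*M"] conjI ballI)
    show "0 \<le> 2*M" using M by simp
    fix u v assume u: "u \<in> X" and v: "v \<in> X"
    show "f u - f v \<le> 2*M * norm (u - v)"
    proof (cases "u = v")
      case True then show ?thesis by simp
    next
      case False
      define d where "d = norm (u - v)"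
      have d: "d > 0" using False by (simp add: d_def)
      define w where "w = u + (1/d) *\<^sub>R (u - v)"
      have "norm w \<le> norm u + norm ((1/d) *\<^sub>R (u - v))" unfolding w_def by (rule norm_triangle_ineq)
      also have "\<dots> = norm u + 1" using d by (simp add: d_def)
      finally have wb: "norm w \<le> R + 1" using R u by force
      have u1: "norm u \<le> R + 1" and v1: "norm v \<le> R + 1" using R u v by force+
      define t where "t = d / (1 + d)"
      have t: "0 \<le> t" "t \<le> 1" using d by (auto simp: t_def)
      have dd: "d + d * d > 0" "1 + d > 0" using d by (auto intro: add_pos_pos)
      have e: "t / d = 1 - t" using d dd by (simp add: t_def field_simps)
      have "t *\<^sub>R w = t *\<^sub>R u + (t / d) *\<^sub>R (u - v)"
        by (simp add: w_def scaleR_right_distrib)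
      then have "t *\<^sub>R w + (1 - t) *\<^sub>R v = t *\<^sub>R u + (1 - t) *\<^sub>R (u - v) + (1 - t) *\<^sub>R v"
        using e by simp
      also have "\<dots> = u" by (simp add: algebra_simps)
      finally have "t *\<^sub>R w + (1 - t) *\<^sub>R v = u" .
      then have "f u \<le> t * f w + (1 - t) * f v"
        using convex_onD[OF assms(1), of "1-t" w v] t by simp
      then have "f u - f v \<le> t * (f w - f v)" by (simp add: algebra_simps)
      also have "\<dots> \<le> t * (2*M)"
        using M wb v1 t by (intro mult_left_mono) (smt (verit) mem_cball_0)+
      also have "\<dots> \<le> d * (2*M)"
        using d M unfolding t_def by (intro mult_right_mono) (auto simp: field_simps)
      finally show ?thesis by (simp add: d_def mult.commute)
    qed
  qed
qed

lemma powr_sum_bound: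
  fixes p :: real
  assumes p: "0 < p" "p < 1"
  shows "K \<ge> 1 \<Longrightarrow> (\<Sum>k\<in>{1..K}. real k powr (p - 1)) \<le> real K powr p / p"
proof (induction K rule: nat_induct_at_least)
  case base then show ?case using p by simp
next
  case (Suc K)
  define t where "t = real K / real (Suc K)"
  have t: "0 < t" "t < 1" using Suc by (auto simp: t_def)
  have Y: "t powr p * 1 powr (1 - p) \<le> p * t + (1 - p) * 1"
    by (rule Youngs_inequality_0) (use p t in auto)
  have "real K powr p = t powr p * real (Suc K) powr p"
    unfolding t_def using Suc by (simp add: powr_divide)
  also have "\<dots> \<le> (p * t + (1 - p)) * real (Suc K) powr p"
    using Y by (intro mult_right_mono) auto
  also have "\<dots> = real (Suc K) powr p - p * (real (Suc K) powr p / real (Suc K))"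
    by (simp add: t_def field_simps)
  also have "real (Suc K) powr p / real (Suc K) = real (Suc K) powr (p - 1)"
    by (simp add: powr_diff)
  finally have A: "real K powr p + p * real (Suc K) powr (p - 1) \<le> real (Suc K) powr p"
    using p by (simp add: field_simps)
  have "real K powr p / p + real (Suc K) powr (p - 1) = (real K powr p + p * real (Suc K) powr (p - 1)) / p"
    using p by (simp add: field_simps)
  also have "\<dots> \<le> real (Suc K) powr p / p" using A p by (intro divide_right_mono) auto
  finally have key: "real K powr p / p + real (Suc K) powr (p - 1) \<le> real (Suc K) powr p / p" .
  show ?case using Suc.IH key by simp
qed

lemma proj_step:
  fixes X :: "'a::euclidean_space set"
  assumes "convex X" "closed X" "X \<noteq> {}" "y \<in> X"
  shows "norm (closest_point X w - y) \<le> norm (w - y)"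
  using closest_point_lipschitz[OF assms(1-3), of w y] closest_point_self[OF assms(4)]
  by (simp add: dist_norm)

lemma norm_diff_sq:
  fixes a d :: "'a::real_inner"
  shows "(norm (a - d))\<^sup>2 = (norm a)\<^sup>2 - 2 * inner d a + (norm d)\<^sup>2"
  by (simp add: power2_norm_eq_inner inner_diff_left inner_diff_right inner_commute)

lemma inner_loop:
  fixes zz gg :: "nat \<Rightarrow> 'a::euclidean_space" and fj :: "nat \<Rightarrow> 'a \<Rightarrow> real"
    and H :: "'a \<Rightarrow> real"
  assumes X: "convex X" "closed X" "X \<noteq> {}"
    and x0: "x0 \<in> X" and y: "y \<in> X"
    and z1: "zz 1 = x0"
    and rec: "\<forall>j\<in>{1..n}. gg j \<in> subdiff (fj j) (zz j) \<and>
               zz (j+1) = closest_point X (zz j - \<gamma> *\<^sub>R gg j - c *\<^sub>R h)"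
    and h: "h \<in> subdiff H x0"
    and gb: "\<forall>j\<in>{1..n}. \<forall>z\<in>X. \<forall>g\<in>subdiff (fj j) z. norm g \<le> Gf"
    and hb: "norm h \<le> GH"
    and lip: "\<forall>j\<in>{1..n}. \<forall>u\<in>X. \<forall>v\<in>X. fj j u - fj j v \<le> L * norm (u - v)"
    and pos: "\<gamma> \<ge> 0" "c \<ge> 0" "L \<ge> 0" "GH \<ge> 0" "Gf \<ge> 0"
    and nN: "n \<le> N"
  shows "(norm (zz (n+1) - y))\<^sup>2 \<le> (norm (x0 - y))\<^sup>2 - 2*\<gamma>*(\<Sum>j\<in>{1..n}. fj j x0 - fj j y)
          - 2*c*real n*(H x0 - H y)
          + real n * (2*(\<gamma>*L + c*GH)*real N*(\<gamma>*Gf + c*GH) + (\<gamma>*Gf + c*GH)\<^sup>2)"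
proof -
  define \<delta> where "\<delta> = \<gamma>*Gf + c*GH"
  have \<delta>0: "\<delta> \<ge> 0" using pos by (simp add: \<delta>_def)
  define E where "E = 2*(\<gamma>*L + c*GH)*real N*\<delta> + \<delta>\<^sup>2"
  have "\<forall>m. m \<le> n \<longrightarrow> zz (m+1) \<in> X \<and> norm (zz (m+1) - x0) \<le> real m * \<delta> \<and>
     (norm (zz (m+1) - y))\<^sup>2 \<le> (norm (x0 - y))\<^sup>2 - 2*\<gamma>*(\<Sum>j\<in>{1..m}. fj j x0 - fj j y)
          - 2*c*real m*(H x0 - H y) + real m * E"
  proof (intro allI impI)
    fix m show "m \<le> n \<Longrightarrow> zz (m+1) \<in> X \<and> norm (zz (m+1) - x0) \<le> real m * \<delta> \<and>
     (norm (zz (m+1) - y))\<^sup>2 \<le> (norm (x0 - y))\<^sup>2 - 2*\<gamma>*(\<Sum>j\<in>{1..m}. fj j x0 - fj j y)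
          - 2*c*real m*(H x0 - H y) + real m * E"
    proof (induction m)
      case 0 then show ?case using z1 x0 by simp
    next
      case (Suc m)
      define j where "j = Suc m"
      have jn: "j \<in> {1..n}" using Suc.prems by (simp add: j_def)
      have IH: "zz j \<in> X" "norm (zz j - x0) \<le> real m * \<delta>"
        "(norm (zz j - y))\<^sup>2 \<le> (norm (x0 - y))\<^sup>2 - 2*\<gamma>*(\<Sum>j\<in>{1..m}. fj j x0 - fj j y)
          - 2*c*real m*(H x0 - H y) + real m * E"
        using Suc by (auto simp: j_def)
      have g: "gg j \<in> subdiff (fj j) (zz j)" and zn: "zz (j+1) = closest_point X (zz j - \<gamma> *\<^sub>R gg j - c *\<^sub>R h)"
        using rec jn by auto
      have gn: "norm (gg j) \<le> Gf" using gb jn IH(1) g by blast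
      define d where "d = \<gamma> *\<^sub>R gg j + c *\<^sub>R h"
      have "norm d \<le> norm (\<gamma> *\<^sub>R gg j) + norm (c *\<^sub>R h)" unfolding d_def by (rule norm_triangle_ineq)
      also have "\<dots> = \<gamma> * norm (gg j) + c * norm h" using pos by simp
      also have "\<dots> \<le> \<delta>" unfolding \<delta>_def using pos gn hb
        by (intro add_mono mult_left_mono) auto
      finally have dn: "norm d \<le> \<delta>" .
      have zn': "zz (j+1) = closest_point X (zz j - d)" using zn by (simp add: d_def algebra_simps)
      have inX: "zz (j+1) \<in> X" using zn' closest_point_in_set[OF X(2,3)] by simp
      have "norm (zz (j+1) - zz j) \<le> norm ((zz j - d) - zz j)"
        unfolding zn' by (rule proj_step[OF X IH(1)])
      then have st: "norm (zz (j+1) - zz j) \<le> \<delta>" using dn by simp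
      have "norm (zz (j+1) - x0) \<le> norm (zz (j+1) - zz j) + norm (zz j - x0)"
        by (rule norm_diff_triangle_le[of _ "zz j"]) auto
      then have dist1: "norm (zz (j+1) - x0) \<le> real (Suc m) * \<delta>" using st IH(2) by (simp add: algebra_simps)
      have mN: "real m * \<delta> \<le> real N * \<delta>" using Suc.prems nN \<delta>0 by (intro mult_right_mono) auto
      have zx: "norm (zz j - x0) \<le> real N * \<delta>" using IH(2) mN by linarith
      have "norm (zz (j+1) - y) \<le> norm ((zz j - d) - y)"
        unfolding zn' by (rule proj_step[OF X y])
      then have "(norm (zz (j+1) - y))\<^sup>2 \<le> (norm ((zz j - y) - d))\<^sup>2"
        by (simp add: algebra_simps power_mono)
      also have "\<dots> = (norm (zz j - y))\<^sup>2 - 2 * inner d (zz j - y) + (norm d)\<^sup>2" by (rule norm_diff_sq)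
      finally have s1: "(norm (zz (j+1) - y))\<^sup>2 \<le> (norm (zz j - y))\<^sup>2 - 2 * inner d (zz j - y) + (norm d)\<^sup>2" .
      have idd: "inner d (zz j - y) = \<gamma> * inner (gg j) (zz j - y) + c * inner h (zz j - y)"
        by (simp add: d_def inner_add_left)
      have "fj j (zz j) + inner (gg j) (y - zz j) \<le> fj j y" using g unfolding subdiff_def by blast
      then have ig: "inner (gg j) (zz j - y) \<ge> fj j (zz j) - fj j y"
        by (simp add: inner_diff_right)
      have "fj j x0 - fj j (zz j) \<le> L * norm (x0 - zz j)" using lip jn x0 IH(1) by blast
      also have "\<dots> \<le> L * (real N * \<delta>)" using zx pos by (intro mult_left_mono) (auto simp: norm_minus_commute)
      finally have ig2: "inner (gg j) (zz j - y) \<ge> fj j x0 - fj j y - L * real N * \<delta>" using ig by simp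
      have "H x0 + inner h (y - x0) \<le> H y" using h unfolding subdiff_def by blast
      then have ih1: "inner h (x0 - y) \<ge> H x0 - H y" by (simp add: inner_diff_right)
      have "\<bar>inner h (zz j - x0)\<bar> \<le> norm h * norm (zz j - x0)" by (rule Cauchy_Schwarz_ineq2)
      also have "\<dots> \<le> GH * (real N * \<delta>)" using hb zx pos by (intro mult_mono) auto
      finally have ih2: "inner h (zz j - x0) \<ge> - (GH * real N * \<delta>)" by simp
      have "inner h (zz j - y) = inner h (x0 - y) + inner h (zz j - x0)" by (simp add: inner_diff_right)
      then have ih: "inner h (zz j - y) \<ge> H x0 - H y - GH * real N * \<delta>" using ih1 ih2 by linarith
      have A1: "\<gamma> * inner (gg j) (zz j - y) \<ge> \<gamma> * (fj j x0 - fj j y - L * real N * \<delta>)"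
        using ig2 pos by (intro mult_left_mono) auto
      have A2: "c * inner h (zz j - y) \<ge> c * (H x0 - H y - GH * real N * \<delta>)"
        using ih pos by (intro mult_left_mono) auto
      have A3: "(norm d)\<^sup>2 \<le> \<delta>\<^sup>2" using dn by (simp add: power_mono)
      have step: "(norm (zz (j+1) - y))\<^sup>2 \<le> (norm (zz j - y))\<^sup>2 - 2*\<gamma>*(fj j x0 - fj j y)
         - 2*c*(H x0 - H y) + E"
        using s1 idd A1 A2 A3 unfolding E_def by (simp add: algebra_simps)
      have sumeq: "(\<Sum>i\<in>{1..Suc m}. fj i x0 - fj i y) = (\<Sum>i\<in>{1..m}. fj i x0 - fj i y) + (fj j x0 - fj j y)"
        by (simp add: j_def)
      show ?case
        using inX dist1 step IH(3) sumeq unfolding j_def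
        by (simp add: algebra_simps)
    qed
  qed
  then show ?thesis using \<delta>_def E_def by simp
qed

lemma finite_bound:
  fixes P :: "'a \<Rightarrow> real \<Rightarrow> bool"
  assumes "finite A" "\<forall>a\<in>A. \<exists>G\<ge>0. P a G" "\<And>a G G'. P a G \<Longrightarrow> G \<le> G' \<Longrightarrow> P a G'"
  shows "\<exists>G\<ge>0. \<forall>a\<in>A. P a G"
proof -
  obtain Gf where Gf: "\<forall>a\<in>A. Gf a \<ge> 0 \<and> P a (Gf a)" using assms(2) by metis
  show ?thesis
  proof (intro exI[of _ "\<Sum>a\<in>A. Gf a"] conjI ballI)
    show "0 \<le> (\<Sum>a\<in>A. Gf a)" using Gf by (simp add: sum_nonneg)
    fix a assume a: "a \<in> A"
    have "Gf a \<le> (\<Sum>a\<in>A. Gf a)" using Gf a assms(1) by (intro member_le_sum) auto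
    then show "P a (\<Sum>a\<in>A. Gf a)" using Gf a assms(3) by blast
  qed
qed

lemma sc_convex:
  fixes H :: "'a::real_normed_vector \<Rightarrow> real"
  assumes "strongly_convex mu H" "mu > 0"
  shows "convex_on UNIV H"
proof (rule convex_onI)
  fix t :: real and u v :: 'a assume t: "0 < t" "t < 1"
  have A: "\<forall>x y s. 0 \<le> s \<and> s \<le> 1 \<longrightarrow> H (s *\<^sub>R x + (1 - s) *\<^sub>R y)
        \<le> s * H x + (1 - s) * H y - mu / 2 * s * (1 - s) * (norm (x - y))\<^sup>2"
    using assms(1) unfolding strongly_convex_def .
  have "H ((1 - t) *\<^sub>R u + t *\<^sub>R v) \<le> (1 - t) * H u + t * H v
     - mu / 2 * (1 - t) * t * (norm (u - v))\<^sup>2"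
    using A[rule_format, of "1-t" u v] t by simp
  moreover have "mu / 2 * (1 - t) * t * (norm (u - v))\<^sup>2 \<ge> 0"
    using t assms(2) by simp
  ultimately show "H ((1 - t) *\<^sub>R u + t *\<^sub>R v) \<le> (1 - t) * H u + t * H v" by simp
qed simp

lemma jensen_F:
  fixes f :: "nat \<Rightarrow> nat \<Rightarrow> 'a::real_vector \<Rightarrow> real"
  assumes cv: "\<forall>i\<in>A. \<forall>j\<in>B i. convex_on UNIV (f i j)"
    and T: "finite T" "T \<noteq> {}" and w: "(\<Sum>k\<in>T. w k) = 1" "\<And>k. k \<in> T \<Longrightarrow> w k \<ge> 0"
  shows "(\<Sum>i\<in>A. \<Sum>j\<in>B i. f i j (\<Sum>k\<in>T. w k *\<^sub>R y k))
          \<le> (\<Sum>k\<in>T. w k * (\<Sum>i\<in>A. \<Sum>j\<in>B i. f i j (y k)))"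
proof -
  have "(\<Sum>i\<in>A. \<Sum>j\<in>B i. f i j (\<Sum>k\<in>T. w k *\<^sub>R y k))
        \<le> (\<Sum>i\<in>A. \<Sum>j\<in>B i. \<Sum>k\<in>T. w k * f i j (y k))"
    using cv by (intro sum_mono convex_on_sum[OF T _ w]) auto
  also have "\<dots> = (\<Sum>k\<in>T. w k * (\<Sum>i\<in>A. \<Sum>j\<in>B i. f i j (y k)))"
    by (simp add: sum_distrib_left sum.swap[of _ T])
  finally show ?thesis .
qed

lemma avg_sq:
  fixes v :: "nat \<Rightarrow> 'a::real_normed_vector" and S :: nat
  assumes "S \<ge> 1"
  shows "(norm ((1 / real S) *\<^sub>R (\<Sum>i\<in>{1..S}. v i)))\<^sup>2 \<le> (1 / real S) * (\<Sum>i\<in>{1..S}. (norm (v i))\<^sup>2)"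
proof -
  have S: "real S > 0" using assms by simp
  have n: "norm ((1 / real S) *\<^sub>R (\<Sum>i\<in>{1..S}. v i)) \<le> (1 / real S) * (\<Sum>i\<in>{1..S}. norm (v i))"
    using S norm_sum[of v "{1..S}"] by (simp add: divide_right_mono)
  have cs: "(\<Sum>i\<in>{1..S}. norm (v i) * 1)\<^sup>2 \<le> (\<Sum>i\<in>{1..S}. (norm (v i))\<^sup>2) * (\<Sum>i\<in>{1..S}. 1\<^sup>2)"
    by (rule Cauchy_Schwarz_ineq_sum)
  have "(norm ((1 / real S) *\<^sub>R (\<Sum>i\<in>{1..S}. v i)))\<^sup>2 \<le> ((1 / real S) * (\<Sum>i\<in>{1..S}. norm (v i)))\<^sup>2"
    using n by (intro power_mono) auto
  also have "\<dots> = (\<Sum>i\<in>{1..S}. norm (v i) * 1)\<^sup>2 / (real S)\<^sup>2" by (simp add: power_divide)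
  also have "\<dots> \<le> (\<Sum>i\<in>{1..S}. (norm (v i))\<^sup>2) * real S / (real S)\<^sup>2"
    using cs S by (intro divide_right_mono) auto
  also have "\<dots> = (1 / real S) * (\<Sum>i\<in>{1..S}. (norm (v i))\<^sup>2)" using S by (simp add: power2_eq_square)
  finally show ?thesis .
qed

theorem theorem2:
  fixes H :: "'a::euclidean_space \<Rightarrow> real"
    and f :: "nat \<Rightarrow> nat \<Rightarrow> 'a \<Rightarrow> real"
    and S :: nat and I :: "nat \<Rightarrow> nat"
    and X :: "'a set" and xH :: 'a
    and \<mu>H \<epsilon> gam1 lam1 :: real
    and x :: "nat \<Rightarrow> 'a"
  assumes S_pos: "S \<ge> 1"
    and I_pos: "\<forall>i\<in>{1..S}. I i \<ge> 1"
    and muH: "\<mu>H > 0" and H_sc: "strongly_convex \<mu>H H"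
    and f_cvx: "\<forall>i\<in>{1..S}. \<forall>j\<in>{1..I i}. convex_on UNIV (f i j)"
    and X: "X \<noteq> {}" "compact X" "convex X"
    and xH: "bilevel_solution H (\<lambda>y. \<Sum>i\<in>{1..S}. \<Sum>j\<in>{1..I i}. f i j y) X xH"
    and eps: "0 < \<epsilon>" "\<epsilon> < 1/2"
    and step: "gam1 > 0" "lam1 > 0"
      "gam1 * lam1 * \<mu>H \<le> 2 * real (\<Sum>i\<in>{1..S}. I i)"
    and fism: "FISM S I f H X
                 (\<lambda>k. gam1 / real k powr (1/2 + \<epsilon>/2))
                 (\<lambda>k. lam1 / real k powr (1/2 - \<epsilon>)) x"
  shows "\<exists>C. \<forall>K\<ge>1.
     (\<lambda>y. \<Sum>i\<in>{1..S}. \<Sum>j\<in>{1..I i}. f i j y)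
        ((1 / (\<Sum>k\<in>{1..K}. gam1 / real k powr (1/2 + \<epsilon>/2))) *\<^sub>R
          (\<Sum>k\<in>{1..K}. (gam1 / real k powr (1/2 + \<epsilon>/2)) *\<^sub>R x k))
     - (\<Sum>i\<in>{1..S}. \<Sum>j\<in>{1..I i}. f i j xH)
     \<le> C / real K powr (1/2 - \<epsilon>)"
proof -
  define F where "F = (\<lambda>y. \<Sum>i\<in>{1..S}. \<Sum>j\<in>{1..I i}. f i j y)"
  define a where "a = 1/2 + \<epsilon>/2"
  define b where "b = 1/2 - \<epsilon>"
  define p where "p = \<epsilon>/2"
  define gam where "gam = (\<lambda>k::nat. gam1 / real k powr a)"
  define lam where "lam = (\<lambda>k::nat. lam1 / real k powr b)"
  define m where "m = (\<Sum>i\<in>{1..S}. I i)"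
  have p: "0 < p" "p < 1" using eps by (auto simp: p_def)
  have Xc: "closed X" using X(2) by (rule compact_imp_closed)
  have xHX: "xH \<in> X" using xH unfolding bilevel_solution_def by blast
  have m1: "real m \<ge> 1"
  proof -
    have "I 1 \<le> m" unfolding m_def using S_pos by (intro member_le_sum) auto
    moreover have "I 1 \<ge> 1" using I_pos S_pos by auto
    ultimately show ?thesis by simp
  qed
  have Im: "\<forall>i\<in>{1..S}. I i \<le> m" unfolding m_def by (auto intro: member_le_sum)
  obtain hH z g where fi: "\<forall>k\<ge>1.
        hH k \<in> subdiff H (x k) \<and>
        (\<forall>i\<in>{1..S}.
           z k i 1 = x k \<and>
           (\<forall>j\<in>{1..I i}.
              g k i j \<in> subdiff (f i j) (z k i j) \<and>
              z k i (j + 1) = closest_point X (z k i j - gam k *\<^sub>R g k i j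
                 - (gam k * lam k / real m) *\<^sub>R hH k))) \<and>
        x (k + 1) = (1 / real S) *\<^sub>R (\<Sum>i\<in>{1..S}. z k i (I i + 1))"
    using fism unfolding FISM_def gam_def lam_def a_def b_def m_def by blast
  have Hcv: "convex_on UNIV H" using sc_convex[OF H_sc muH] .
  obtain GH where GH: "GH \<ge> 0" "\<forall>z\<in>X. \<forall>g\<in>subdiff H z. norm g \<le> GH"
    using subgrad_bound[OF Hcv X(2)] by blast
  obtain MH where MH: "MH \<ge> 0" "\<forall>w\<in>X. \<bar>H w\<bar> \<le> MH"
    using bounded_on_compact[OF convex_on_continuous[OF open_UNIV Hcv] X(2)] by blast
  have "\<forall>i\<in>{1..S}. \<exists>G\<ge>0. \<forall>j\<in>{1..I i}. \<forall>z\<in>X. \<forall>g\<in>subdiff (f i j) z. norm g \<le> G"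
  proof
    fix i assume i: "i \<in> {1..S}"
    have "\<forall>j\<in>{1..I i}. \<exists>G\<ge>0. \<forall>z\<in>X. \<forall>g\<in>subdiff (f i j) z. norm g \<le> G"
      using f_cvx i subgrad_bound[OF _ X(2)] by blast
    then show "\<exists>G\<ge>0. \<forall>j\<in>{1..I i}. \<forall>z\<in>X. \<forall>g\<in>subdiff (f i j) z. norm g \<le> G"
      by (intro finite_bound[where P="\<lambda>j G. \<forall>z\<in>X. \<forall>g\<in>subdiff (f i j) z. norm g \<le> G"])
         (auto, meson order_trans)
  qed
  moreover have mono_sg: "\<And>i G G'. (\<forall>j\<in>{1..I i}. \<forall>z\<in>X. \<forall>g\<in>subdiff (f i j) z. norm g \<le> G) \<Longrightarrow> G \<le> G' \<Longrightarrow>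
      (\<forall>j\<in>{1..I i}. \<forall>z\<in>X. \<forall>g\<in>subdiff (f i j) z. norm g \<le> G')"
    by (meson order_trans)
  ultimately obtain Gf where Gf: "Gf \<ge> 0" "\<forall>i\<in>{1..S}. \<forall>j\<in>{1..I i}. \<forall>z\<in>X. \<forall>g\<in>subdiff (f i j) z. norm g \<le> Gf"
    using finite_bound[where P="\<lambda>i G. \<forall>j\<in>{1..I i}. \<forall>z\<in>X. \<forall>g\<in>subdiff (f i j) z. norm g \<le> G" and A="{1..S}",
       OF finite_atLeastAtMost] by blast
  have mono_lip: "\<And>j G G'. (\<forall>u\<in>X. \<forall>v\<in>X. f i j u - f i j v \<le> G * norm (u - v)) \<Longrightarrow> G \<le> G' \<Longrightarrow>
      (\<forall>u\<in>X. \<forall>v\<in>X. f i j u - f i j v \<le> G' * norm (u - v))" for i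
  proof (intro ballI)
    fix j G G' u v assume A: "\<forall>u\<in>X. \<forall>v\<in>X. f i j u - f i j v \<le> G * norm (u - v)" "G \<le> G'" "u \<in> X" "v \<in> X"
    have "G * norm (u - v) \<le> G' * norm (u - v)" using A(2) by (intro mult_right_mono) auto
    then show "f i j u - f i j v \<le> G' * norm (u - v)" using A by force
  qed
  have "\<forall>i\<in>{1..S}. \<exists>G\<ge>0. \<forall>j\<in>{1..I i}. \<forall>u\<in>X. \<forall>v\<in>X. f i j u - f i j v \<le> G * norm (u - v)"
  proof
    fix i assume i: "i \<in> {1..S}"
    have LJ: "\<forall>j\<in>{1..I i}. \<exists>G\<ge>0. \<forall>u\<in>X. \<forall>v\<in>X. f i j u - f i j v \<le> G * norm (u - v)"
      using f_cvx i lipschitz_bound[OF _ X(2)] by blast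
    show "\<exists>G\<ge>0. \<forall>j\<in>{1..I i}. \<forall>u\<in>X. \<forall>v\<in>X. f i j u - f i j v \<le> G * norm (u - v)"
      using finite_bound[where P="\<lambda>j G. \<forall>u\<in>X. \<forall>v\<in>X. f i j u - f i j v \<le> G * norm (u - v)",
          OF finite_atLeastAtMost LJ mono_lip[of i]] .
  qed
  moreover have mono_lip2: "\<And>i G G'. (\<forall>j\<in>{1..I i}. \<forall>u\<in>X. \<forall>v\<in>X. f i j u - f i j v \<le> G * norm (u - v)) \<Longrightarrow> G \<le> G' \<Longrightarrow>
      (\<forall>j\<in>{1..I i}. \<forall>u\<in>X. \<forall>v\<in>X. f i j u - f i j v \<le> G' * norm (u - v))"
    using mono_lip by blast
  ultimately obtain L where L: "L \<ge> 0" "\<forall>i\<in>{1..S}. \<forall>j\<in>{1..I i}. \<forall>u\<in>X. \<forall>v\<in>X. f i j u - f i j v \<le> L * norm (u - v)"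
    using finite_bound[where P="\<lambda>i G. \<forall>j\<in>{1..I i}. \<forall>u\<in>X. \<forall>v\<in>X. f i j u - f i j v \<le> G * norm (u - v)" and A="{1..S}",
       OF finite_atLeastAtMost] by blast
  have gampos: "\<And>k. k \<ge> 1 \<Longrightarrow> gam k > 0" using step(1) by (auto simp: gam_def intro!: divide_pos_pos)
  have gam0: "\<And>k. gam k \<ge> 0" using step(1) by (simp add: gam_def)
  have lam0: "\<And>k. lam k \<ge> 0" using step(2) by (simp add: lam_def)
  have lam1b: "\<And>k. k \<ge> 1 \<Longrightarrow> lam k \<le> lam1"
  proof -
    fix k :: nat assume k: "k \<ge> 1"
    have "real k powr b \<ge> 1" using k eps by (intro ge_one_powr_ge_zero) (auto simp: b_def)
    then show "lam k \<le> lam1" using step(2) unfolding lam_def by (simp add: divide_le_eq)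
  qed
  have zX: "\<And>k i j. k \<ge> 1 \<Longrightarrow> i \<in> {1..S} \<Longrightarrow> j \<in> {1..I i} \<Longrightarrow> z k i (j+1) \<in> X"
  proof -
    fix k i j :: nat assume a: "k \<ge> 1" "i \<in> {1..S}" "j \<in> {1..I i}"
    have "z k i (j+1) = closest_point X (z k i j - gam k *\<^sub>R g k i j
                 - (gam k * lam k / real m) *\<^sub>R hH k)" using fi a by blast
    then show "z k i (j+1) \<in> X" by (simp add: closest_point_in_set[OF Xc X(1)])
  qed
  have xX: "\<And>k. k \<ge> 2 \<Longrightarrow> x k \<in> X"
  proof -
    fix k :: nat assume k: "k \<ge> 2"
    define k' where "k' = k - 1"
    have k': "k = k' + 1" "k' \<ge> 1" using k by (auto simp: k'_def)
    have "x k = (1 / real S) *\<^sub>R (\<Sum>i\<in>{1..S}. z k' i (I i + 1))" using fi k' by blast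
    also have "\<dots> = (\<Sum>i\<in>{1..S}. (1 / real S) *\<^sub>R z k' i (I i + 1))" by (simp add: scaleR_sum_right)
    also have "\<dots> \<in> X"
    proof (rule convex_sum[OF finite_atLeastAtMost X(3)])
      show "(\<Sum>i\<in>{1..S}. 1 / real S) = 1" using S_pos by simp
      show "\<And>i. i \<in> {1..S} \<Longrightarrow> 0 \<le> 1 / real S" by simp
      show "\<And>i. i \<in> {1..S} \<Longrightarrow> z k' i (I i + 1) \<in> X" using zX k' I_pos by auto
    qed
    finally show "x k \<in> X" .
  qed
  define D where "D = (\<lambda>k. (norm (x k - xH))\<^sup>2)"
  define c where "c = (\<lambda>k. gam k * lam k / real m)"
  define E where "E = (\<lambda>k. 2*(gam k*L + c k*GH)*real m*(gam k*Gf + c k*GH) + (gam k*Gf + c k*GH)\<^sup>2)"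
  have PS: "\<And>k. k \<ge> 2 \<Longrightarrow> D (k+1) \<le> D k - (2*gam k/real S)*(F (x k) - F xH)
            - (2*gam k*lam k/real S)*(H (x k) - H xH) + (real m/real S) * E k"
  proof -
    fix k :: nat assume k: "k \<ge> 2"
    have k1: "k \<ge> 1" using k by simp
    have xk: "x k \<in> X" using xX k .
    have hk: "hH k \<in> subdiff H (x k)" using fi k1 by blast
    have hkb: "norm (hH k) \<le> GH" using GH(2) xk hk by blast
    define Hg where "Hg = H (x k) - H xH"
    define A where "A = (\<lambda>i. (\<Sum>j\<in>{1..I i}. f i j (x k) - f i j xH))"
    have Bi: "\<forall>i\<in>{1..S}. (norm (z k i (I i + 1) - xH))\<^sup>2 \<le> D k - 2*gam k*A i
         - 2*c k*real (I i)*Hg + real (I i) * E k"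
    proof
      fix i assume i: "i \<in> {1..S}"
      have z1: "z k i 1 = x k" using fi k1 i by blast
      have rec: "\<forall>j\<in>{1..I i}. g k i j \<in> subdiff (f i j) (z k i j) \<and>
          z k i (j+1) = closest_point X (z k i j - gam k *\<^sub>R g k i j - c k *\<^sub>R hH k)"
        using fi k1 i unfolding c_def by blast
      have gb: "\<forall>j\<in>{1..I i}. \<forall>z\<in>X. \<forall>g\<in>subdiff (f i j) z. norm g \<le> Gf" using Gf(2) i by blast
      have lip: "\<forall>j\<in>{1..I i}. \<forall>u\<in>X. \<forall>v\<in>X. f i j u - f i j v \<le> L * norm (u - v)" using L(2) i by blast
      have c0: "c k \<ge> 0" using gam0 lam0 m1 by (simp add: c_def)
      show "(norm (z k i (I i + 1) - xH))\<^sup>2 \<le> D k - 2*gam k*A i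
         - 2*c k*real (I i)*Hg + real (I i) * E k"
        using inner_loop[OF X(3) Xc X(1) xk xHX z1 rec hk gb hkb lip gam0 c0 L(1) GH(1) Gf(1), of m] Im i
        unfolding D_def E_def A_def Hg_def by simp
    qed
    have S0: "real S > 0" using S_pos by simp
    have "x (k+1) = (1 / real S) *\<^sub>R (\<Sum>i\<in>{1..S}. z k i (I i + 1))" using fi k1 by blast
    then have xk1: "x (k+1) - xH = (1 / real S) *\<^sub>R (\<Sum>i\<in>{1..S}. z k i (I i + 1) - xH)"
      using S0 by (simp add: sum_subtractf scaleR_diff_right sum_constant_scaleR)
    have "D (k+1) \<le> (1 / real S) * (\<Sum>i\<in>{1..S}. (norm (z k i (I i + 1) - xH))\<^sup>2)"
      unfolding D_def xk1 by (rule avg_sq[OF S_pos])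
    also have "\<dots> \<le> (1 / real S) * (\<Sum>i\<in>{1..S}. D k - 2*gam k*A i - 2*c k*real (I i)*Hg + real (I i) * E k)"
      using Bi S0 by (intro mult_left_mono sum_mono) auto
    also have "(\<Sum>i\<in>{1..S}. D k - 2*gam k*A i - 2*c k*real (I i)*Hg + real (I i) * E k)
        = real S * D k - 2*gam k*(\<Sum>i\<in>{1..S}. A i) - 2*c k*real m*Hg + real m * E k"
      by (simp add: sum.distrib sum_subtractf sum_distrib_left sum_distrib_right m_def)
    also have "(\<Sum>i\<in>{1..S}. A i) = F (x k) - F xH" by (simp add: A_def F_def sum_subtractf)
    also have "2*c k*real m*Hg = 2*gam k*lam k*Hg" using m1 by (simp add: c_def)
    finally have L1: "D (k+1) \<le> (1 / real S) * (real S * D k - 2*gam k*(F (x k) - F xH) - 2*gam k*lam k*Hg + real m * E k)" .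
    have "(1 / real S) * (real S * D k - 2*gam k*(F (x k) - F xH) - 2*gam k*lam k*Hg + real m * E k)
       = D k - (2*gam k/real S)*(F (x k) - F xH)
            - (2*gam k*lam k/real S)*(H (x k) - H xH) + (real m/real S) * E k"
      using S0 by (simp add: Hg_def field_simps)
    then show "D (k+1) \<le> D k - (2*gam k/real S)*(F (x k) - F xH)
            - (2*gam k*lam k/real S)*(H (x k) - H xH) + (real m/real S) * E k"
      using L1 by linarith
  qed
  define E0 where "E0 = 2*(L + lam1*GH)*real m*(Gf + lam1*GH) + (Gf + lam1*GH)\<^sup>2"
  define u where "u = (\<lambda>k::nat. real k powr (p - 1))"
  define Cst where "Cst = 2*MH*gam1*lam1 + (real m/2)*E0*gam1\<^sup>2"
  have E0: "E0 \<ge> 0" using L GH Gf step m1 by (simp add: E0_def)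
  have Cst0: "Cst \<ge> 0" using MH E0 step m1 by (simp add: Cst_def)
  have Ek: "\<And>k. k \<ge> 1 \<Longrightarrow> E k \<le> (gam k)\<^sup>2 * E0"
  proof -
    fix k :: nat assume k: "k \<ge> 1"
    have ck: "c k \<le> gam k * lam1"
    proof -
      have gl0: "gam k * lam k \<ge> 0" using gam0 lam0 by simp
      have "gam k * lam k * 1 \<le> gam k * lam k * real m" by (rule mult_left_mono[OF m1 gl0])
      then have "c k \<le> gam k * lam k" using m1 by (simp add: c_def divide_le_eq)
      also have "\<dots> \<le> gam k * lam1" using lam1b[OF k] gam0 by (intro mult_left_mono) auto
      finally show ?thesis .
    qed
    have c0: "c k \<ge> 0" using gam0 lam0 m1 by (simp add: c_def)
    have b1: "gam k*L + c k*GH \<le> gam k * (L + lam1*GH)"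
    proof -
      have "c k*GH \<le> gam k*lam1*GH" by (rule mult_right_mono[OF ck GH(1)])
      moreover have "gam k*(L + lam1*GH) = gam k*L + gam k*lam1*GH" by (simp add: distrib_left)
      ultimately show ?thesis by linarith
    qed
    have b2: "gam k*Gf + c k*GH \<le> gam k * (Gf + lam1*GH)"
    proof -
      have "c k*GH \<le> gam k*lam1*GH" by (rule mult_right_mono[OF ck GH(1)])
      moreover have "gam k*(Gf + lam1*GH) = gam k*Gf + gam k*lam1*GH" by (simp add: distrib_left)
      ultimately show ?thesis by linarith
    qed
    have n1: "gam k*L + c k*GH \<ge> 0" and n2: "gam k*Gf + c k*GH \<ge> 0"
      using gam0[of k] c0 L(1) GH(1) Gf(1) by auto
    have "2*(gam k*L + c k*GH)*real m*(gam k*Gf + c k*GH) \<le> 2*(gam k * (L + lam1*GH))*real m*(gam k * (Gf + lam1*GH))"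
      using b1 b2 n1 n2 m1 by (intro mult_mono mult_right_mono) auto
    moreover have "(gam k*Gf + c k*GH)\<^sup>2 \<le> (gam k * (Gf + lam1*GH))\<^sup>2"
      using b2 n2 by (intro power_mono) auto
    moreover have "2*(gam k * (L + lam1*GH))*real m*(gam k * (Gf + lam1*GH)) + (gam k * (Gf + lam1*GH))\<^sup>2
       = (gam k)\<^sup>2 * E0" by (simp add: E0_def power2_eq_square algebra_simps)
    moreover have "E k = 2*(gam k*L + c k*GH)*real m*(gam k*Gf + c k*GH) + (gam k*Gf + c k*GH)\<^sup>2"
      by (simp add: E_def)
    ultimately show "E k \<le> (gam k)\<^sup>2 * E0" by linarith
  qed
  have uinv: "\<And>k. k \<ge> 1 \<Longrightarrow> u k = 1 / real k powr (1 - p)"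
  proof -
    fix k :: nat assume k: "k \<ge> 1"
    show "u k = 1 / real k powr (1 - p)" unfolding u_def using k
      by (simp add: powr_minus_divide[symmetric])
  qed
  have gamlam: "\<And>k. k \<ge> 1 \<Longrightarrow> gam k * lam k = gam1 * lam1 * u k"
  proof -
    fix k :: nat assume k: "k \<ge> 1"
    have "real k powr a * real k powr b = real k powr (1 - p)"
      by (simp add: powr_add[symmetric] a_def b_def p_def)
    moreover have "u k = 1 / real k powr (1 - p)" unfolding u_def using k
      by (simp add: powr_minus_divide[symmetric])
    ultimately show "gam k * lam k = gam1 * lam1 * u k" by (simp add: gam_def lam_def)
  qed
  have gamsq: "\<And>k. k \<ge> 1 \<Longrightarrow> (gam k)\<^sup>2 \<le> gam1\<^sup>2 * u k"
  proof -
    fix k :: nat assume k: "k \<ge> 1"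
    have pa: "(real k powr a)\<^sup>2 = real k powr (2*a)"
      by (metis mult_2 powr_add power2_eq_square)
    have "(gam k)\<^sup>2 = gam1\<^sup>2 / real k powr (2*a)"
      by (simp add: gam_def power_divide pa)
    also have "\<dots> \<le> gam1\<^sup>2 / real k powr (1 - p)"
      using k eps by (intro divide_left_mono powr_mono) (auto simp: a_def p_def)
    also have "\<dots> = gam1\<^sup>2 * u k" using uinv[OF k] by simp
    finally show "(gam k)\<^sup>2 \<le> gam1\<^sup>2 * u k" .
  qed
  have PS2: "\<And>k. k \<ge> 2 \<Longrightarrow> gam k * (F (x k) - F xH) \<le> (real S/2) * D k - (real S/2) * D (k+1) + Cst * u k"
  proof -
    fix k :: nat assume k: "k \<ge> 2"
    have k1: "k \<ge> 1" using k by simp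
    have S0: "real S > 0" using S_pos by simp
    define Fg where "Fg = F (x k) - F xH"
    define Hg where "Hg = H (x k) - H xH"
    have P: "D (k+1) \<le> D k - (2*gam k/real S)*Fg - (2*gam k*lam k/real S)*Hg + (real m/real S) * E k"
      using PS[OF k] unfolding Fg_def Hg_def .
    have "(real S/2) * D (k+1) \<le> (real S/2) * (D k - (2*gam k/real S)*Fg - (2*gam k*lam k/real S)*Hg + (real m/real S) * E k)"
      by (rule mult_left_mono[OF P]) simp
    also have "\<dots> = (real S/2) * D k - gam k*Fg - gam k*lam k*Hg + (real m/2) * E k"
      using S0 by (simp add: field_simps)
    finally have Q: "gam k*Fg \<le> (real S/2) * D k - (real S/2) * D (k+1) - gam k*lam k*Hg + (real m/2) * E k"
      by linarith
    have Hg: "- Hg \<le> 2*MH" using MH(2) xX[OF k] xHX unfolding Hg_def by (smt (verit))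
    have gl0: "gam k * lam k \<ge> 0" using gam0 lam0 by simp
    have "gam k*lam k*(-Hg) \<le> gam k*lam k*(2*MH)" by (rule mult_left_mono[OF Hg gl0])
    then have Q1: "- (gam k*lam k*Hg) \<le> 2*MH*gam1*lam1*u k" using gamlam[OF k1] by (simp add: algebra_simps)
    have "E k \<le> gam1\<^sup>2 * u k * E0" using Ek[OF k1] mult_right_mono[OF gamsq[OF k1] E0] by linarith
    then have "(real m/2) * E k \<le> (real m/2) * (gam1\<^sup>2 * u k * E0)" by (intro mult_left_mono) auto
    then have Q2: "(real m/2) * E k \<le> (real m/2)*E0*gam1\<^sup>2 * u k" by (simp add: algebra_simps)
    have "Cst * u k = 2*MH*gam1*lam1*u k + (real m/2)*E0*gam1\<^sup>2 * u k" by (simp add: Cst_def algebra_simps)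
    then show "gam k * (F (x k) - F xH) \<le> (real S/2) * D k - (real S/2) * D (k+1) + Cst * u k"
      using Q Q1 Q2 unfolding Fg_def by linarith
  qed
  define B1 where "B1 = gam1 * \<bar>F (x 1) - F xH\<bar>"
  have gam1e: "gam 1 = gam1" by (simp add: gam_def)
  have u1: "u 1 = 1" by (simp add: u_def)
  have CUM: "\<And>K. K \<ge> 1 \<Longrightarrow> (\<Sum>k\<in>{1..K}. gam k * (F (x k) - F xH))
      \<le> B1 + (real S/2) * D 2 - (real S/2) * D (K+1) + Cst * (\<Sum>k\<in>{1..K}. u k)"
  proof -
    fix K :: nat assume "K \<ge> 1"
    then show "(\<Sum>k\<in>{1..K}. gam k * (F (x k) - F xH))
      \<le> B1 + (real S/2) * D 2 - (real S/2) * D (K+1) + Cst * (\<Sum>k\<in>{1..K}. u k)"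
    proof (induction K rule: nat_induct_at_least)
      case base
      have "gam1 * (F (x 1) - F xH) \<le> B1" unfolding B1_def using step(1)
        by (intro mult_left_mono) auto
      then show ?case using gam1e u1 Cst0 by (simp add: numeral_2_eq_2)
    next
      case (Suc K)
      have "gam (Suc K) * (F (x (Suc K)) - F xH) \<le> (real S/2) * D (Suc K) - (real S/2) * D (Suc K + 1) + Cst * u (Suc K)"
        using PS2[of "Suc K"] Suc.hyps by simp
      then show ?case using Suc.IH by (simp add: distrib_left)
    qed
  qed
  define C1 where "C1 = B1 + (real S/2) * D 2 + Cst / p"
  have C10: "C1 \<ge> 0" unfolding C1_def B1_def D_def using step(1) Cst0 p by simp
  have final: "\<And>K. K \<ge> 1 \<Longrightarrow> F ((1 / (\<Sum>k\<in>{1..K}. gam k)) *\<^sub>R (\<Sum>k\<in>{1..K}. gam k *\<^sub>R x k)) - F xH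
      \<le> (C1 / gam1) / real K powr b"
  proof -
    fix K :: nat assume K: "K \<ge> 1"
    define \<Gamma> where "\<Gamma> = (\<Sum>k\<in>{1..K}. gam k)"
    have Kp: "real K powr p \<ge> 1" using K p by (intro ge_one_powr_ge_zero) auto
    have T: "(\<Sum>k\<in>{1..K}. u k) \<le> real K powr p / p" unfolding u_def using powr_sum_bound[OF p K] .
    have D0: "D (K+1) \<ge> 0" by (simp add: D_def)
    have "(\<Sum>k\<in>{1..K}. gam k * (F (x k) - F xH)) \<le> B1 + (real S/2) * D 2 + Cst * (\<Sum>k\<in>{1..K}. u k)"
    proof -
      have "(real S/2) * D (K+1) \<ge> 0" using D0 by simp
      then show ?thesis using CUM[OF K] by linarith
    qed
    also have "\<dots> \<le> B1 + (real S/2) * D 2 + Cst * (real K powr p / p)"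
      using mult_left_mono[OF T Cst0] by simp
    also have "\<dots> \<le> (B1 + (real S/2) * D 2) * real K powr p + Cst * (real K powr p / p)"
    proof -
      have "B1 + (real S/2) * D 2 \<ge> 0" unfolding B1_def D_def using step(1) by simp
      then have "(B1 + (real S/2) * D 2) * 1 \<le> (B1 + (real S/2) * D 2) * real K powr p"
        using Kp by (intro mult_left_mono) auto
      then show ?thesis by simp
    qed
    also have "\<dots> = C1 * real K powr p" unfolding C1_def by (simp add: algebra_simps)
    finally have SUM: "(\<Sum>k\<in>{1..K}. gam k * (F (x k) - F xH)) \<le> C1 * real K powr p" .
    have glow: "\<And>k. k \<in> {1..K} \<Longrightarrow> gam1 / real K powr a \<le> gam k"
    proof -
      fix k assume k: "k \<in> {1..K}"
      have "real k powr a \<le> real K powr a" using k eps by (intro powr_mono2) (auto simp: a_def)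
      moreover have "real k powr a > 0" using k by simp
      moreover have "real K powr a > 0" using K by simp
      ultimately show "gam1 / real K powr a \<le> gam k" unfolding gam_def using step(1)
        by (intro divide_left_mono) (auto intro: mult_pos_pos)
    qed
    have Glow: "real K * (gam1 / real K powr a) \<le> \<Gamma>"
      using sum_bounded_below[of "{1..K}" "gam1 / real K powr a" gam, OF glow] unfolding \<Gamma>_def by simp
    have lowpos: "real K * (gam1 / real K powr a) > 0" using K step(1) by simp
    have Gpos: "\<Gamma> > 0" using Glow lowpos by linarith
    define w where "w = (\<lambda>k. gam k / \<Gamma>)"
    have w1: "(\<Sum>k\<in>{1..K}. w k) = 1" using Gpos unfolding w_def \<Gamma>_def by (simp add: sum_divide_distrib[symmetric])
    have w0: "\<And>k. k \<in> {1..K} \<Longrightarrow> w k \<ge> 0" unfolding w_def using gam0 Gpos by simp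
    have xe: "(1 / \<Gamma>) *\<^sub>R (\<Sum>k\<in>{1..K}. gam k *\<^sub>R x k) = (\<Sum>k\<in>{1..K}. w k *\<^sub>R x k)"
      unfolding w_def by (simp add: scaleR_sum_right divide_inverse mult.commute)
    have J: "F (\<Sum>k\<in>{1..K}. w k *\<^sub>R x k) \<le> (\<Sum>k\<in>{1..K}. w k * F (x k))"
      unfolding F_def using jensen_F[OF f_cvx finite_atLeastAtMost _ w1 w0] K by simp
    have "(\<Sum>k\<in>{1..K}. w k * F (x k)) - F xH = (\<Sum>k\<in>{1..K}. w k * (F (x k) - F xH))"
      using w1 by (simp add: right_diff_distrib sum_subtractf sum_distrib_right[symmetric])
    also have "\<dots> = (\<Sum>k\<in>{1..K}. gam k * (F (x k) - F xH)) / \<Gamma>"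
      unfolding w_def by (simp add: sum_divide_distrib)
    also have "\<dots> \<le> C1 * real K powr p / \<Gamma>" using SUM Gpos by (intro divide_right_mono) auto
    also have "\<dots> \<le> C1 * real K powr p / (real K * (gam1 / real K powr a))"
      using divide_left_mono[OF Glow _ mult_pos_pos[OF Gpos lowpos], of "C1 * real K powr p"] C10 by simp
    also have "\<dots> = (C1 / gam1) * ((real K powr p * real K powr a) / real K)"
      using K step(1) by (simp add: field_simps)
    also have "(real K powr p * real K powr a) / real K = 1 / real K powr b"
    proof -
      have e: "p + a = 1 - b" by (simp add: a_def b_def p_def)
      have "real K powr p * real K powr a = real K powr (1 - b)"
        by (simp add: powr_add[symmetric] e)
      also have "\<dots> = real K / real K powr b" using K by (simp add: powr_diff)
      finally show ?thesis using K by simp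
    qed
    finally have fin: "(\<Sum>k\<in>{1..K}. w k * F (x k)) - F xH \<le> (C1 / gam1) / real K powr b" by simp
    have "F ((1 / (\<Sum>k\<in>{1..K}. gam k)) *\<^sub>R (\<Sum>k\<in>{1..K}. gam k *\<^sub>R x k)) = F (\<Sum>k\<in>{1..K}. w k *\<^sub>R x k)"
      using xe unfolding \<Gamma>_def by simp
    then show "F ((1 / (\<Sum>k\<in>{1..K}. gam k)) *\<^sub>R (\<Sum>k\<in>{1..K}. gam k *\<^sub>R x k)) - F xH
      \<le> (C1 / gam1) / real K powr b"
      using J fin by linarith
  qed
  show ?thesis
    using final unfolding F_def gam_def a_def b_def by blast
qed

end
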